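(* Let $\mathcal A\subset\mathbb R^n$ be compact with diameter $D_{\mathcal A}<\infty$, let $\mathcal X=\mathrm{conv}(\mathcal A)$ or $\mathcal X=\mathrm{lin}(\mathcal A)$, and let $f$ be convex and differentiable with $L$-Lipschitz gradient. Let $\{x_t\}_{t\ge0}$ be generated by the AC-FW algorithm described in the context, let $\eta\in(1,2)$, and assume Conditions (D) and (S) hold, with $R\ge1$ the constant of part (iii) of Condition (S). Let $\{h_t\}_{t\ge0}$ denote the elements of $\mathcal G\cap\mathcal I_\eta$ in increasing order. Then for any $t\ge0$, $$f(x_{h_t})-f(x^\star)\le\frac{\max\left\{\left(\frac{2R}{2-\eta}-1\right)(f(x_0)-f(x^\star)),\ \frac{2LR^2D_{\mathcal A}^2}{2-\eta}\right\}}{t+\frac{2R}{2-\eta}-1}.$$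
   Context: $D_{\mathcal A}:=\sup_{x,y\in\mathcal A}\|x-y\|_2$; $\|\nabla f(x)-\nabla f(y)\|_2\le L\|x-y\|_2$. $x^\star$ is an optimal solution of $\min_{x\in\mathcal X}f(x)$. For $x\ne y$, $\ell(x,y):=2|f(y)-f(x)-\nabla f(x)^\top(y-x)|/\|y-x\|_2^2$, $\ell(x,x):=0$. AC-FW algorithm: given a damping sequence $\{r_t\}_{t\ge0}$ and a direction-finding subroutine, pick $x_{-1}\in\mathcal A$, $x_0\in\arg\min_{v\in\mathcal A}\nabla f(x_{-1})^\top v$, $L_0:=\ell(x_{-1},x_0)$. For $t=0,1,\dots$: $v_t\in\arg\min_{v\in\mathcal A}\nabla f(x_t)^\top v$; the subroutine returns $d_t\in\mathbb R^n$ and $\gamma_t^{\max}\in(0,\infty]$; $\gamma_t:=\min\{\nabla f(x_t)^\top d_t/(L_t\|d_t\|_2^2),\gamma_t^{\max}\}$; $\bar x_{t+1}:=x_t-\gamma_td_t$; $L_{t+1}:=\max\{\ell(x_t,\bar x_{t+1}),r_tL_t\}$; $x_{t+1}:=\bar x_{t+1}$ if $f(\bar x_{t+1})<f(x_t)$, else $x_{t+1}:=x_t$. $\mathcal I_\eta:=\{t\ge0:L_{t+1}\le\eta L_t\}$; $\mathcal G:=\{t\ge0:\gamma_t^{\max}\ge1\text{ or }\gamma_t<\gamma_t^{\max}\}$. Condition (D): $r_t\in(0,1]$ for all $t$ and $\prod_{t\ge0}r_t\in(0,1]$. Condition (S): for all $t\ge0$: (i) $\|d_t\|_2\le D_{\mathcal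 A}$ and $x_t-\gamma d_t\in\mathcal X$ for all finite $\gamma\in[0,\gamma_t^{\max}]$; (ii) $\mathcal G$ is infinite; (iii) since $f$ is convex, there is a constant $R\ge1$ independent of $t$ with $\nabla f(x_t)^\top d_t\ge(f(x_t)-f(x^\star))/R$. *)

theory Defs
  imports "HOL-Analysis.Analysis"
begin

definition ell :: "('a::real_inner \<Rightarrow> real) \<Rightarrow> ('a \<Rightarrow> 'a) \<Rightarrow> 'a \<Rightarrow> 'a \<Rightarrow> real" where
  "ell f g x y = (if x = y then 0
     else 2 * \<bar>f y - f x - g x \<bullet> (y - x)\<bar> / (norm (y - x))\<^sup>2)"

end

theory Submission
  imports Defs
begin


lemma deriv_line:
  fixes f :: "'a::real_inner \<Rightarrow> real"
  assumes f_grad: "\<And>y. (f has_derivative (\<lambda>h. g y \<bullet> h)) (at y)"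
  shows "DERIV (\<lambda>s. f (x + s *\<^sub>R h)) s :> g (x + s *\<^sub>R h) \<bullet> h"
proof -
  have 1: "((\<lambda>s. x + s *\<^sub>R h) has_derivative (\<lambda>s'. s' *\<^sub>R h)) (at s)"
    by (auto intro!: derivative_eq_intros)
  have "((\<lambda>s. f (x + s *\<^sub>R h)) has_derivative (\<lambda>s'. g (x + s *\<^sub>R h) \<bullet> (s' *\<^sub>R h))) (at s)"
    using has_derivative_compose[OF 1 f_grad] by simp
  moreover have "(\<lambda>s'. g (x + s *\<^sub>R h) \<bullet> (s' *\<^sub>R h)) = (*) (g (x + s *\<^sub>R h) \<bullet> h)"
    by (auto simp: fun_eq_iff)
  ultimately show ?thesis by (simp add: has_field_derivative_def)
qed

lemma descent:
  fixes f :: "'a::real_inner \<Rightarrow> real"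
  assumes f_grad: "\<And>y. (f has_derivative (\<lambda>h. g y \<bullet> h)) (at y)"
    and Lip: "\<And>y z. norm (g y - g z) \<le> L * norm (y - z)"
  shows "\<bar>f y - f x - g x \<bullet> (y - x)\<bar> \<le> L / 2 * (norm (y - x))\<^sup>2"
proof -
  define h where "h = y - x"
  define n where "n = (norm h)\<^sup>2"
  have bnd: "\<bar>(g (x + s *\<^sub>R h) - g x) \<bullet> h\<bar> \<le> L * s * n" if "0 \<le> s" for s
  proof -
    have "\<bar>(g (x + s *\<^sub>R h) - g x) \<bullet> h\<bar> \<le> norm (g (x + s *\<^sub>R h) - g x) * norm h"
      by (rule Cauchy_Schwarz_ineq2)
    also have "\<dots> \<le> (L * norm (s *\<^sub>R h)) * norm h"
      using Lip[of "x + s *\<^sub>R h" x] by (intro mult_right_mono) auto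
    also have "\<dots> = L * s * n" using that by (simp add: n_def power2_eq_square)
    finally show ?thesis .
  qed
  define p1 where "p1 = (\<lambda>s. f (x + s *\<^sub>R h) - s * (g x \<bullet> h) - L / 2 * s\<^sup>2 * n)"
  define p2 where "p2 = (\<lambda>s. f (x + s *\<^sub>R h) - s * (g x \<bullet> h) + L / 2 * s\<^sup>2 * n)"
  have d1: "DERIV p1 s :> g (x + s *\<^sub>R h) \<bullet> h - g x \<bullet> h - L * s * n" for s
    unfolding p1_def
    by (auto intro!: derivative_eq_intros deriv_line[OF f_grad] simp: power2_eq_square field_simps)
  have d2: "DERIV p2 s :> g (x + s *\<^sub>R h) \<bullet> h - g x \<bullet> h + L * s * n" for s
    unfolding p2_def
    by (auto intro!: derivative_eq_intros deriv_line[OF f_grad] simp: power2_eq_square field_simps)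
  obtain z1 where z1: "0 < z1" "z1 < 1" "p1 1 - p1 0 = (1 - 0) * (g (x + z1 *\<^sub>R h) \<bullet> h - g x \<bullet> h - L * z1 * n)"
    using MVT2[of 0 1 p1, OF _ d1] by auto
  obtain z2 where z2: "0 < z2" "z2 < 1" "p2 1 - p2 0 = (1 - 0) * (g (x + z2 *\<^sub>R h) \<bullet> h - g x \<bullet> h + L * z2 * n)"
    using MVT2[of 0 1 p2, OF _ d2] by auto
  have e1: "g (x + z1 *\<^sub>R h) \<bullet> h - g x \<bullet> h \<le> L * z1 * n"
    using bnd[of z1] z1(1) by (simp add: inner_diff_left)
  have e2: "g (x + z2 *\<^sub>R h) \<bullet> h - g x \<bullet> h \<ge> - (L * z2 * n)"
    using bnd[of z2] z2(1) by (simp add: inner_diff_left)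
  have "p1 1 \<le> p1 0" using z1(3) e1 by simp
  moreover have "p2 1 \<ge> p2 0" using z2(3) e2 by simp
  moreover have "x + h = y" by (simp add: h_def)
  ultimately have "f y - f x - g x \<bullet> (y - x) \<le> L / 2 * (norm (y - x))\<^sup>2"
    "- (L / 2 * (norm (y - x))\<^sup>2) \<le> f y - f x - g x \<bullet> (y - x)"
    unfolding p1_def p2_def n_def h_def by simp_all
  then show ?thesis by (intro abs_leI) linarith+
qed

lemma ell_le:
  fixes f :: "'a::real_inner \<Rightarrow> real"
  assumes f_grad: "\<And>y. (f has_derivative (\<lambda>h. g y \<bullet> h)) (at y)"
    and Lip: "\<And>y z. norm (g y - g z) \<le> L * norm (y - z)" and L0: "0 \<le> L"
  shows "ell f g x y \<le> L"
proof (cases "x = y")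
  case True
  then show ?thesis using True L0 by (simp add: ell_def)
next
  case False
  then have "(norm (y - x))\<^sup>2 > 0" by simp
  then show ?thesis using descent[OF f_grad Lip, of y x] False
    by (simp add: ell_def divide_le_eq)
qed

lemma aux_abs: "2 * \<bar>e::real\<bar> \<le> m * n \<Longrightarrow> e \<le> m / 2 * n"
proof -
  assume h: "2 * \<bar>e\<bar> \<le> m * n"
  have "e \<le> \<bar>e\<bar>" by simp
  then have "2 * e \<le> m * n" using h by linarith
  then show ?thesis by (simp add: field_simps)
qed

lemma ell_ge:
  fixes f :: "'a::real_inner \<Rightarrow> real"
  assumes "ell f g x y \<le> M"
  shows "f y - f x - g x \<bullet> (y - x) \<le> M / 2 * (norm (y - x))\<^sup>2"
proof (cases "x = y")
  case True
  then show ?thesis using assms by (simp add: ell_def)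
next
  case False
  then have "(norm (y - x))\<^sup>2 > 0" by simp
  then have "2 * \<bar>f y - f x - g x \<bullet> (y - x)\<bar> \<le> M * (norm (y - x))\<^sup>2" using assms False
    by (simp add: ell_def divide_le_eq)
  then show ?thesis using aux_abs by blast
qed


lemma step_lemma:
  fixes x d xb xn :: "'a::real_inner" and f :: "'a \<Rightarrow> real"
  assumes xb: "xb = x - gam *\<^sub>R d"
    and desc: "f xb - f x - g x \<bullet> (xb - x) \<le> L1 / 2 * (norm (xb - x))\<^sup>2"
    and L1: "L1 \<le> \<eta> * Lt" and Lt: "0 < Lt" "Lt \<le> L" and eta: "1 < \<eta>" "\<eta> < 2" and R: "R \<ge> 1"
    and dD: "norm d \<le> D" and gd: "g x \<bullet> d \<ge> \<Delta> / R" and Dnn: "\<Delta> \<ge> 0" and Dl: "\<Delta> = f x - fs"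
    and xn: "f xn \<le> f xb"
    and cases: "gam = g x \<bullet> d / (Lt * (norm d)\<^sup>2) \<or> (1 \<le> gam \<and> gam \<le> g x \<bullet> d / (Lt * (norm d)\<^sup>2))"
  shows "f xn - fs \<le> (1 - (2 - \<eta>) / (2 * R)) * \<Delta> \<or> \<Delta> = 0
     \<or> (2 * L * R\<^sup>2 * D\<^sup>2 / (2 - \<eta>) > 0 \<and> f xn - fs \<le> \<Delta> - \<Delta>\<^sup>2 / (2 * L * R\<^sup>2 * D\<^sup>2 / (2 - \<eta>)))"
proof -
  define a where "a = g x \<bullet> d"
  define n where "n = (norm d)\<^sup>2"
  have Rp: "R > 0" using R by simp
  have a0: "a \<ge> 0" using gd Dnn Rp unfolding a_def
  proof -
    have "0 \<le> \<Delta> / R" using Dnn Rp by simp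
    then show "0 \<le> g x \<bullet> d" using gd by linarith
  qed
  have n0: "n \<ge> 0" by (simp add: n_def)
  have e1: "g x \<bullet> (xb - x) = - gam * a" by (simp add: xb a_def)
  have e2: "(norm (xb - x))\<^sup>2 = gam\<^sup>2 * n" by (simp add: xb n_def power_mult_distrib)
  have "L1 / 2 * (gam\<^sup>2 * n) \<le> \<eta> * Lt / 2 * (gam\<^sup>2 * n)"
    using L1 n0 by (intro mult_right_mono) auto
  then have fb: "f xb - f x \<le> - gam * a + \<eta> * Lt / 2 * (gam\<^sup>2 * n)"
    using desc e1 e2 by simp
  have "\<Delta> = 0" if "n = 0"
  proof -
    have "d = 0" using that by (simp add: n_def)
    then have "\<Delta> / R \<le> 0" using gd by simp
    then show ?thesis using Dnn Rp by (simp add: divide_le_0_iff)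
  qed
  moreover
  {
    assume np: "n > 0"
    have Ltn: "Lt * n > 0" using np Lt by simp
    have ga: "\<Delta> / R \<le> a" using gd by (simp add: a_def)
    have "f xn - fs \<le> (1 - (2 - \<eta>) / (2 * R)) * \<Delta> \<or>
      (2 * L * R\<^sup>2 * D\<^sup>2 / (2 - \<eta>) > 0 \<and> f xn - fs \<le> \<Delta> - \<Delta>\<^sup>2 / (2 * L * R\<^sup>2 * D\<^sup>2 / (2 - \<eta>)))"
    proof (cases "gam = a / (Lt * n)")
      case True
      have "Lt * n \<noteq> 0" using Ltn by linarith
      then have "gam * (Lt * n) = a" using True by simp
      then have "\<eta> * Lt / 2 * (gam\<^sup>2 * n) = \<eta> / 2 * gam * a"
        by (simp add: power2_eq_square algebra_simps)
      moreover have "- (1 - \<eta> / 2) * (gam * a) = - gam * a + \<eta> / 2 * gam * a"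
        by (simp add: algebra_simps)
      ultimately have "f xb - f x \<le> - (1 - \<eta> / 2) * (gam * a)"
        using fb by linarith
      moreover have "gam * a = a\<^sup>2 / (Lt * n)" using True by (simp add: power2_eq_square)
      ultimately have "f xb - f x \<le> - (1 - \<eta> / 2) * (a\<^sup>2 / (Lt * n))" by simp
      moreover have "(\<Delta> / R)\<^sup>2 / (L * D\<^sup>2) \<le> a\<^sup>2 / (Lt * n)"
      proof (rule frac_le)
        show "0 \<le> a\<^sup>2" by simp
        have "\<Delta> / R \<ge> 0" using Dnn Rp by simp
        then show "(\<Delta> / R)\<^sup>2 \<le> a\<^sup>2" using ga by (intro power_mono) auto
        show "0 < Lt * n" by (rule Ltn)
        have "n \<le> D\<^sup>2" unfolding n_def using dD by (intro power_mono) auto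
        then show "Lt * n \<le> L * D\<^sup>2" using Lt n0 by (intro mult_mono) auto
      qed
      ultimately have "f xb - f x \<le> - (1 - \<eta> / 2) * ((\<Delta> / R)\<^sup>2 / (L * D\<^sup>2))"
      proof -
        assume h1: "f xb - f x \<le> - (1 - \<eta> / 2) * (a\<^sup>2 / (Lt * n))"
          and h2: "(\<Delta> / R)\<^sup>2 / (L * D\<^sup>2) \<le> a\<^sup>2 / (Lt * n)"
        have "(1 - \<eta> / 2) * ((\<Delta> / R)\<^sup>2 / (L * D\<^sup>2)) \<le> (1 - \<eta> / 2) * (a\<^sup>2 / (Lt * n))"
          using h2 eta by (intro mult_left_mono) auto
        then show ?thesis using h1 by linarith
      qed
      moreover have "(1 - \<eta> / 2) * ((\<Delta> / R)\<^sup>2 / (L * D\<^sup>2)) = \<Delta>\<^sup>2 / (2 * L * R\<^sup>2 * D\<^sup>2 / (2 - \<eta>))"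
        using eta by (simp add: field_simps power_divide)
      moreover have "2 * L * R\<^sup>2 * D\<^sup>2 / (2 - \<eta>) > 0"
      proof -
        have "norm d > 0" using np by (simp add: n_def)
        then have "D > 0" using dD by linarith
        moreover have "L > 0" using Lt by linarith
        ultimately show ?thesis using Rp eta by simp
      qed
      moreover have "f xn - fs \<le> f xb - f x + \<Delta>" using xn Dl by linarith
      ultimately have "2 * L * R\<^sup>2 * D\<^sup>2 / (2 - \<eta>) > 0 \<and> f xn - fs \<le> \<Delta> - \<Delta>\<^sup>2 / (2 * L * R\<^sup>2 * D\<^sup>2 / (2 - \<eta>))"
        by linarith
      then show ?thesis by blast
    next
      case False
      then have g1: "1 \<le> gam" and g2: "gam \<le> a / (Lt * n)" using cases by (auto simp: a_def n_def)
      have "gam * (Lt * n) \<le> a" using g2 Ltn by (simp add: le_divide_eq)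
      then have "\<eta> / 2 * gam * (gam * (Lt * n)) \<le> \<eta> / 2 * gam * a"
        using g1 eta by (intro mult_left_mono) auto
      then have "\<eta> * Lt / 2 * (gam\<^sup>2 * n) \<le> \<eta> / 2 * gam * a"
        by (simp add: power2_eq_square algebra_simps)
      then have "f xb - f x \<le> - (1 - \<eta> / 2) * gam * a" using fb by (simp add: algebra_simps)
      also have "\<dots> \<le> - (1 - \<eta> / 2) * a"
      proof -
        have "(1 - \<eta> / 2) * a * 1 \<le> (1 - \<eta> / 2) * a * gam"
          using g1 eta a0 by (intro mult_left_mono) auto
        then show ?thesis by (simp add: algebra_simps)
      qed
      also have "\<dots> \<le> - (1 - \<eta> / 2) * (\<Delta> / R)"
      proof -
        have "(1 - \<eta> / 2) * (\<Delta> / R) \<le> (1 - \<eta> / 2) * a" using ga eta by (intro mult_left_mono) auto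
        then show ?thesis by linarith
      qed
      finally have "f xb - f x \<le> - (1 - \<eta> / 2) * (\<Delta> / R)" .
      moreover have "(1 - \<eta> / 2) * (\<Delta> / R) = (2 - \<eta>) / (2 * R) * \<Delta>" by (simp add: field_simps)
      ultimately have q: "f xn - fs \<le> \<Delta> - (2 - \<eta>) / (2 * R) * \<Delta>" using xn Dl by linarith
      have "(1 - (2 - \<eta>) / (2 * R)) * \<Delta> = \<Delta> - (2 - \<eta>) / (2 * R) * \<Delta>"
        by (simp only: left_diff_distrib mult_1)
      then have "f xn - fs \<le> (1 - (2 - \<eta>) / (2 * R)) * \<Delta>" using q by simp
      then show ?thesis by blast
    qed
  }
  ultimately show ?thesis using n0 by force
qed


lemma rec_step:
  fixes s C D D' :: real
  assumes "s \<ge> 1" "C > 0" "D \<ge> 0" "D * s \<le> C" "D' * C \<le> D * C - D\<^sup>2"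
  shows "D' * (s + 1) \<le> C"
proof -
  have "D * 1 \<le> D * s" using assms by (intro mult_left_mono) auto
  then have DC: "D \<le> C" using assms by linarith
  have "D' * C * (s + 1) \<le> (D * C - D\<^sup>2) * (s + 1)"
    using assms by (intro mult_right_mono) auto
  also have "\<dots> = (D * s) * (C - D) + D * (C - D)" by (simp add: power2_eq_square algebra_simps)
  also have "\<dots> \<le> C * (C - D) + D * (C - D)"
    using assms DC by (intro add_right_mono mult_right_mono) auto
  also have "\<dots> \<le> C * C" by (simp add: algebra_simps)
  finally have "(D' * (s + 1)) * C \<le> C * C" by (simp add: algebra_simps)
  then show ?thesis using assms(2) by simp
qed



theorem theorem2:
  fixes A X :: "(real ^ 'n) set"
    and f :: "real ^ 'n \<Rightarrow> real" and g :: "real ^ 'n \<Rightarrow> real ^ 'n"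
    and L \<eta> R :: real and xs xm1 :: "real ^ 'n"
    and x d xb :: "nat \<Rightarrow> real ^ 'n"
    and gmax :: "nat \<Rightarrow> ereal" and gam Lk r :: "nat \<Rightarrow> real"
  assumes A_compact: "compact A" and A_ne: "A \<noteq> {}"
    and X_def: "X = convex hull A \<or> X = span A"
    and f_convex: "convex_on UNIV f"
    and f_grad: "\<And>y. (f has_derivative (\<lambda>h. g y \<bullet> h)) (at y)"
    and g_Lip: "\<And>y z. norm (g y - g z) \<le> L * norm (y - z)"
    and xs_opt: "xs \<in> X" "\<And>y. y \<in> X \<Longrightarrow> f xs \<le> f y"
    (* initialization *)
    and xm1: "xm1 \<in> A"
    and x0: "x 0 \<in> A" "\<And>v. v \<in> A \<Longrightarrow> g xm1 \<bullet> x 0 \<le> g xm1 \<bullet> v"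
    and L0: "Lk 0 = ell f g xm1 (x 0)"
    and L0_pos: "Lk 0 > 0"
    (* iteration *)
    and gmax_pos: "\<And>t. gmax t > 0"
    and gam_def: "\<And>t. ereal (gam t) = min (ereal (g (x t) \<bullet> d t / (Lk t * (norm (d t))\<^sup>2))) (gmax t)"
    and xb_def: "\<And>t. xb t = x t - gam t *\<^sub>R d t"
    and L_step: "\<And>t. Lk (Suc t) = max (ell f g (x t) (xb t)) (r t * Lk t)"
    and x_step: "\<And>t. x (Suc t) = (if f (xb t) < f (x t) then xb t else x t)"
    (* Condition (D) *)
    and D_r: "\<And>t. 0 < r t \<and> r t \<le> 1"
    and D_prod: "\<exists>p. 0 < p \<and> p \<le> 1 \<and> (\<lambda>T. \<Prod>t<T. r t) \<longlonglongrightarrow> p"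
    (* Condition (S) *)
    and S_i: "\<And>t. norm (d t) \<le> diameter A"
    and S_i': "\<And>t (\<gamma>::real). 0 \<le> \<gamma> \<Longrightarrow> ereal \<gamma> \<le> gmax t \<Longrightarrow> x t - \<gamma> *\<^sub>R d t \<in> X"
    and S_ii: "infinite {t. gmax t \<ge> 1 \<or> ereal (gam t) < gmax t}"
    and S_iii: "R \<ge> 1" "\<And>t. g (x t) \<bullet> d t \<ge> (f (x t) - f xs) / R"
    and eta: "1 < \<eta>" "\<eta> < 2"
  shows "infinite ({t. gmax t \<ge> 1 \<or> ereal (gam t) < gmax t} \<inter> {t. Lk (Suc t) \<le> \<eta> * Lk t})
    \<and> (\<forall>t. f (x (enumerate ({t. gmax t \<ge> 1 \<or> ereal (gam t) < gmax t}
                               \<inter> {t. Lk (Suc t) \<le> \<eta> * Lk t}) t)) - f xs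
        \<le> max ((2 * R / (2 - \<eta>) - 1) * (f (x 0) - f xs))
               (2 * L * R\<^sup>2 * (diameter A)\<^sup>2 / (2 - \<eta>))
          / (real t + 2 * R / (2 - \<eta>) - 1))"
proof -
  define G where "G = {t. gmax t \<ge> 1 \<or> ereal (gam t) < gmax t}"
  define I where "I = {t. Lk (Suc t) \<le> \<eta> * Lk t}"
  have rL: "r t * Lk t \<le> Lk (Suc t)" for t using L_step[of t] by simp
  have "xm1 \<noteq> x 0" using L0 L0_pos by (auto simp: ell_def)
  then have np: "0 < norm (x 0 - xm1)" by simp
  have "0 \<le> L * norm (x 0 - xm1)" using g_Lip[of "x 0" xm1] norm_ge_zero order_trans by blast
  then have Lnn: "0 \<le> L" using np by (simp add: zero_le_mult_iff)
  have ellL: "ell f g a b \<le> L" for a b using ell_le[OF f_grad g_Lip Lnn] .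
  have Lpos: "Lk t > 0" for t
  proof (induction t)
    case 0 then show ?case using L0_pos .
  next
    case (Suc t) then show ?case using rL[of t] D_r[of t] proof -
      have "0 < r t * Lk t" using Suc D_r[of t] by simp
      then show ?thesis using rL[of t] by linarith
    qed
  qed
  have LkL: "Lk t \<le> L" for t
  proof (induction t)
    case 0 then show ?case using L0 ellL by simp
  next
    case (Suc t)
    have "r t * Lk t \<le> 1 * Lk t" using D_r[of t] Lpos[of t] by (intro mult_right_mono) auto
    then show ?case using Suc L_step[of t] ellL by simp
  qed
  have AX: "A \<subseteq> X"
  proof -
    have "A \<subseteq> convex hull A" by (rule hull_subset)
    moreover have "A \<subseteq> span A" by (rule span_superset)
    ultimately show ?thesis using X_def by blast
  qed
  have Rp: "R > 0" using S_iii(1) by simp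
  have gam_ok: "0 \<le> gam t \<and> ereal (gam t) \<le> gmax t" if xt: "x t \<in> X" for t
  proof -
    have "f xs \<le> f (x t)" using xs_opt(2) xt .
    then have "0 \<le> (f (x t) - f xs) / R" using Rp by simp
    then have "0 \<le> g (x t) \<bullet> d t" using S_iii(2)[of t] by linarith
    then have u0: "0 \<le> g (x t) \<bullet> d t / (Lk t * (norm (d t))\<^sup>2)" using Lpos[of t] by simp
    have "ereal (gam t) \<le> gmax t" using gam_def[of t] by simp
    moreover have "0 \<le> ereal (gam t)" unfolding gam_def[of t] using u0 gmax_pos[of t]
      by (intro min.boundedI) (auto intro: less_imp_le)
    ultimately show ?thesis by simp
  qed
  have xX: "x t \<in> X" for t
  proof (induction t)
    case 0 then show ?case using AX x0(1) by auto
  next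
    case (Suc t)
    have "xb t \<in> X" using S_i'[of "gam t" t] gam_ok[OF Suc] xb_def[of t] by simp
    then show ?case using x_step[of t] Suc by simp
  qed
  have fs_le: "f xs \<le> f (x t)" for t using xs_opt(2) xX .
  have fm1: "f (x (Suc t)) \<le> f (x t)" "f (x (Suc t)) \<le> f (xb t)" for t using x_step[of t] by auto
  have "decseq (\<lambda>t. f (x t))" unfolding decseq_Suc_iff using fm1(1) by blast
  then have fmono: "m \<le> n \<Longrightarrow> f (x n) \<le> f (x m)" for m n by (simp add: decseq_def)
  obtain p where p: "0 < p" "p \<le> 1" "(\<lambda>T. \<Prod>t<T. r t) \<longlonglongrightarrow> p" using D_prod by blast
  have "decseq (\<lambda>T. \<Prod>t<T. r t)" unfolding decseq_Suc_iff
  proof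
    fix T
    have "0 \<le> (\<Prod>t<T. r t)" using D_r by (intro prod_nonneg) (simp add: less_imp_le)
    then show "(\<Prod>t<Suc T. r t) \<le> (\<Prod>t<T. r t)" using D_r[of T] by (simp add: mult_left_le)
  qed
  then have prodp: "p \<le> (\<Prod>t<T. r t)" for T using decseq_ge p(3) by blast
  have prod_nn: "0 \<le> (\<Prod>t<T. r t)" for T using D_r by (intro prod_nonneg) (simp add: less_imp_le)
  have growth: "Lk 0 * \<eta> ^ card ({..<T} - I) * (\<Prod>t<T. r t) \<le> Lk T" for T
  proof (induction T)
    case 0 then show ?case by simp
  next
    case (Suc T)
    define Q where "Q = Lk 0 * \<eta> ^ card ({..<T} - I) * (\<Prod>t<T. r t)"
    have Q0: "0 \<le> Q" unfolding Q_def using L0_pos eta prod_nn[of T] by simp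
    have QL: "Q \<le> Lk T" using Suc Q_def by simp
    have rT: "0 < r T" "r T \<le> 1" using D_r[of T] by auto
    show ?case
    proof (cases "T \<in> I")
      case True
      then have "{..<Suc T} - I = {..<T} - I" by (auto simp: lessThan_Suc)
      then have "Lk 0 * \<eta> ^ card ({..<Suc T} - I) * (\<Prod>t<Suc T. r t) = Q * r T"
        by (simp add: Q_def)
      also have "\<dots> \<le> Lk T * r T" using QL rT by (intro mult_right_mono) auto
      also have "\<dots> \<le> Lk (Suc T)" using rL[of T] by (simp add: mult.commute)
      finally show ?thesis .
    next
      case False
      then have "{..<Suc T} - I = insert T ({..<T} - I)" by (auto simp: lessThan_Suc)
      then have "card ({..<Suc T} - I) = Suc (card ({..<T} - I))" by simp
      then have "Lk 0 * \<eta> ^ card ({..<Suc T} - I) * (\<Prod>t<Suc T. r t) = \<eta> * Q * r T"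
        by (simp add: Q_def algebra_simps)
      also have "\<dots> \<le> \<eta> * Q * 1" using Q0 rT eta by (intro mult_left_mono) auto
      also have "\<dots> \<le> \<eta> * Lk T" using QL eta by simp
      also have "\<dots> \<le> Lk (Suc T)" using False by (simp add: I_def)
      finally show ?thesis .
    qed
  qed
  have finB: "finite (- I)"
  proof (rule ccontr)
    assume inf: "infinite (- I)"
    obtain N where N: "L / (Lk 0 * p) < \<eta> ^ N" using real_arch_pow eta(1) by blast
    obtain F where F: "finite F" "card F = N" "F \<subseteq> - I" using infinite_arbitrarily_large[OF inf] by blast
    obtain T where T: "F \<subseteq> {..<T}" using finite_nat_bounded[OF F(1)] by blast
    have "F \<subseteq> {..<T} - I" using F T by auto
    then have "card F \<le> card ({..<T} - I)" by (intro card_mono) auto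
    then have "N \<le> card ({..<T} - I)" using F(2) by simp
    then have "\<eta> ^ N \<le> \<eta> ^ card ({..<T} - I)" using eta by (intro power_increasing) auto
    then have "Lk 0 * \<eta> ^ N * p \<le> Lk 0 * \<eta> ^ card ({..<T} - I) * (\<Prod>t<T. r t)"
      using L0_pos p prodp[of T] eta by (intro mult_mono) auto
    also have "\<dots> \<le> L" using growth[of T] LkL[of T] by linarith
    finally have "Lk 0 * \<eta> ^ N * p \<le> L" .
    moreover have "L < Lk 0 * p * \<eta> ^ N" using N L0_pos p by (simp add: divide_less_eq mult.commute)
    ultimately show False by (simp add: algebra_simps)
  qed
  have Ginf: "infinite G" using S_ii by (simp add: G_def)
  have "G - (- I) = G \<inter> I" by auto
  then have infS: "infinite (G \<inter> I)" using Diff_infinite_finite[OF finB Ginf] by simp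
  define h where "h = enumerate (G \<inter> I)"
  define a where "a = 2 * R / (2 - \<eta>) - 1"
  define M where "M = 2 * L * R\<^sup>2 * (diameter A)\<^sup>2 / (2 - \<eta>)"
  define C where "C = max (a * (f (x 0) - f xs)) M"
  define c where "c = (2 - \<eta>) / (2 * R)"
  have a1: "a > 1"
  proof -
    have "2 * (2 - \<eta>) < 2 * R" using eta S_iii(1) by simp
    then have "2 < 2 * R / (2 - \<eta>)" using eta by (simp add: less_divide_eq)
    then show ?thesis by (simp add: a_def)
  qed
  have ca: "c * (a + 1) = 1" using eta Rp by (simp add: a_def c_def field_simps)
  have c0: "c \<ge> 0" using eta Rp by (simp add: c_def)
  have C0: "a * (f (x 0) - f xs) \<le> C" "M \<le> C" by (simp_all add: C_def)
  have Cnn: "0 \<le> C" using C0 a1 fs_le[of 0] proof -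
    have "0 \<le> a * (f (x 0) - f xs)" using a1 fs_le[of 0] by simp
    then show ?thesis using C0 by linarith
  qed
  have main: "(f (x (h k)) - f xs) * (real k + a) \<le> C" for k
  proof (induction k)
    case 0
    have "f (x (h 0)) - f xs \<le> f (x 0) - f xs" using fmono[of 0 "h 0"] by simp
    then have "(f (x (h 0)) - f xs) * a \<le> (f (x 0) - f xs) * a" using a1 by (intro mult_right_mono) auto
    then show ?case using C0 by (simp add: mult.commute)
  next
    case (Suc k)
    define t where "t = h k"
    have tS: "t \<in> G" "t \<in> I" using enumerate_in_set[OF infS, of k] by (auto simp: t_def h_def)
    have "Suc t \<le> h (Suc k)" using enumerate_mono[OF _ infS, of k "Suc k"] by (simp add: t_def h_def)
    then have hle: "f (x (h (Suc k))) - f xs \<le> f (x (Suc t)) - f xs" using fmono by simp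
    define \<Delta> where "\<Delta> = f (x t) - f xs"
    define s where "s = real k + a"
    have IH: "\<Delta> * s \<le> C" using Suc by (simp add: \<Delta>_def s_def t_def)
    have Dnn: "\<Delta> \<ge> 0" using fs_le[of t] by (simp add: \<Delta>_def)
    have s1: "s \<ge> 1" using a1 by (simp add: s_def)
    have desc: "f (xb t) - f (x t) - g (x t) \<bullet> (xb t - x t) \<le> Lk (Suc t) / 2 * (norm (xb t - x t))\<^sup>2"
      using L_step[of t] by (intro ell_ge) simp
    have L1: "Lk (Suc t) \<le> \<eta> * Lk t" using tS(2) by (simp add: I_def)
    define u where "u = g (x t) \<bullet> d t / (Lk t * (norm (d t))\<^sup>2)"
    have cases: "gam t = u \<or> (1 \<le> gam t \<and> gam t \<le> u)"
    proof (cases "ereal u \<le> gmax t")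
      case True
      then have "ereal (gam t) = ereal u" using gam_def[of t] by (simp add: u_def min_def)
      then show ?thesis by simp
    next
      case False
      then have e: "ereal (gam t) = gmax t" using gam_def[of t] by (simp add: u_def min_def)
      then have "1 \<le> gmax t" using tS(1) by (simp add: G_def)
      then have "ereal 1 \<le> ereal (gam t)" using e by (simp add: one_ereal_def)
      then have "1 \<le> gam t" by simp
      moreover have "gam t \<le> u" using False e by (metis ereal_less_eq(3) linorder_le_cases)
      ultimately show ?thesis by simp
    qed
    have st: "f (x (Suc t)) - f xs \<le> (1 - (2 - \<eta>) / (2 * R)) * \<Delta> \<or> \<Delta> = 0
     \<or> (2 * L * R\<^sup>2 * (diameter A)\<^sup>2 / (2 - \<eta>) > 0 \<and> f (x (Suc t)) - f xs \<le> \<Delta> - \<Delta>\<^sup>2 / (2 * L * R\<^sup>2 * (diameter A)\<^sup>2 / (2 - \<eta>)))"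
      by (rule step_lemma[where f=f and g=g and x="x t" and d="d t" and xb="xb t" and xn="x (Suc t)" and gam="gam t" and fs="f xs", OF xb_def[of t] desc L1 Lpos[of t] LkL[of t] eta(1,2) S_iii(1) S_i[of t] _ Dnn \<Delta>_def fm1(2)[of t]])
         (use S_iii(2)[of t] cases in \<open>simp_all add: \<Delta>_def u_def\<close>)
    have "(f (x (Suc t)) - f xs) * (s + 1) \<le> C"
    proof -
      consider (B) "f (x (Suc t)) - f xs \<le> (1 - c) * \<Delta>" | (Z) "\<Delta> = 0"
        | (A) "M > 0" "f (x (Suc t)) - f xs \<le> \<Delta> - \<Delta>\<^sup>2 / M"
        using st unfolding c_def M_def by blast
      then show ?thesis
      proof cases
        case B
        have ck: "0 \<le> c * real k" using c0 by simp
        have "(1 - c) * (s + 1) = s + 1 - c * (a + 1) - c * real k" by (simp add: s_def algebra_simps)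
        then have "(1 - c) * (s + 1) \<le> s" using ca ck by linarith
        then have "\<Delta> * ((1 - c) * (s + 1)) \<le> \<Delta> * s" using Dnn by (intro mult_left_mono) auto
        moreover have "(f (x (Suc t)) - f xs) * (s + 1) \<le> (1 - c) * \<Delta> * (s + 1)"
          using B s1 by (intro mult_right_mono) auto
        ultimately show ?thesis using IH by (simp add: algebra_simps)
      next
        case Z
        have "f (x (Suc t)) - f xs \<le> 0" using fm1(1)[of t] Z by (simp add: \<Delta>_def)
        then have "(f (x (Suc t)) - f xs) * (s + 1) \<le> 0" using s1 by (simp add: mult_nonpos_nonneg)
        then show ?thesis using Cnn by linarith
      next
        case A
        have Cp: "C > 0" using A(1) C0(2) by linarith
        have "\<Delta>\<^sup>2 / C \<le> \<Delta>\<^sup>2 / M" using A(1) C0(2) by (intro divide_left_mono) auto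
        then have "f (x (Suc t)) - f xs \<le> \<Delta> - \<Delta>\<^sup>2 / C" using A(2) by linarith
        then have "(f (x (Suc t)) - f xs) * C \<le> (\<Delta> - \<Delta>\<^sup>2 / C) * C" using Cp by (intro mult_right_mono) auto
        also have "\<dots> = \<Delta> * C - \<Delta>\<^sup>2" using Cp by (simp add: algebra_simps)
        finally show ?thesis using rec_step[OF s1 Cp Dnn IH] by blast
      qed
    qed
    moreover have "(f (x (h (Suc k))) - f xs) * (s + 1) \<le> (f (x (Suc t)) - f xs) * (s + 1)"
      using hle s1 by (intro mult_right_mono) auto
    ultimately show ?case by (simp add: s_def algebra_simps)
  qed
  have fin: "f (x (h k)) - f xs \<le> C / (real k + 2 * R / (2 - \<eta>) - 1)" for k
  proof -
    have e: "real k + 2 * R / (2 - \<eta>) - 1 = real k + a" by (simp add: a_def)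
    have "real k + a > 0" using a1 by simp
    then have "f (x (h k)) - f xs \<le> C / (real k + a)" using main[of k] by (simp add: le_divide_eq)
    then show ?thesis by (simp only: e)
  qed
  show ?thesis using infS fin unfolding G_def I_def h_def C_def M_def a_def by simp
qed

end
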